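(* An element $\omega\in B_k$ is a zero divisor if and only if there exist $w_1,\dots,w_k$ with $w_i\in\{v_i,1-v_i\}$ for $1\le i\le k$ such that $\omega$ belongs to the ideal $\langle w_1,w_2,\dots,w_k\rangle$ of $B_k$.
   Context: Let $p$ be a prime, $r\ge 1$ an integer, and $\mathbb{F}_{p^r}$ the finite field with $p^r$ elements. For an integer $k\ge 1$, $B_k$ denotes the commutative ring $B_k=\mathbb{F}_{p^r}[v_1,\dots,v_k]/\langle v_i^2-v_i,\ v_iv_j-v_jv_i : 1\le i,j\le k\rangle$. An element $\omega$ is a zero divisor if $\omega b=0$ for some nonzero $b\in B_k$. *)

theory Defs
  imports Main
begin

text \<open>Concrete model of B_k = F[v_1,...,v_k]/(v_i^2 - v_i, v_i v_j - v_j v_i).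
  Since v_i^2 = v_i, every element has a unique normal form
  sum over S subset {1..k} of c_S * v_S, where v_S is the product of v_i for i in S.
  An element is represented by its coefficient function S to c_S, which vanishes
  outside the subsets of {1..k}. Multiplication: v_S * v_T = v_(S union T).\<close>

type_synonym 'a bk = "nat set \<Rightarrow> 'a"

definition Bk :: "nat \<Rightarrow> ('a::zero) bk set" where
  "Bk k = {f. \<forall>S. \<not> S \<subseteq> {1..k} \<longrightarrow> f S = 0}"

definition bk_zero :: "('a::zero) bk" where
  "bk_zero = (\<lambda>S. 0)"

definition bk_one :: "('a::{zero,one}) bk" where
  "bk_one = (\<lambda>S. if S = {} then 1 else 0)"

definition bk_var :: "nat \<Rightarrow> ('a::{zero,one}) bk" where
  "bk_var i = (\<lambda>S. if S = {i} then 1 else 0)"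

definition bk_add :: "('a::plus) bk \<Rightarrow> 'a bk \<Rightarrow> 'a bk" where
  "bk_add f g = (\<lambda>S. f S + g S)"

definition bk_sub :: "('a::minus) bk \<Rightarrow> 'a bk \<Rightarrow> 'a bk" where
  "bk_sub f g = (\<lambda>S. f S - g S)"

definition bk_mult :: "nat \<Rightarrow> ('a::comm_semiring_1) bk \<Rightarrow> 'a bk \<Rightarrow> 'a bk" where
  "bk_mult k f g = (\<lambda>U. \<Sum>S\<in>Pow {1..k}. \<Sum>T\<in>Pow {1..k}.
      if S \<union> T = U then f S * g T else 0)"

definition bk_zero_divisor :: "nat \<Rightarrow> ('a::comm_semiring_1) bk \<Rightarrow> bool" where
  "bk_zero_divisor k \<omega> \<longleftrightarrow> (\<exists>b\<in>Bk k. b \<noteq> bk_zero \<and> bk_mult k \<omega> b = bk_zero)"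

definition bk_ideal :: "nat \<Rightarrow> (nat \<Rightarrow> ('a::comm_semiring_1) bk) \<Rightarrow> 'a bk set" where
  "bk_ideal k W = {g. \<exists>a. (\<forall>i\<in>{1..k}. a i \<in> Bk k) \<and>
      g = (\<lambda>S. \<Sum>i\<in>{1..k}. bk_mult k (a i) (W i) S)}"

end

theory Submission
  imports Defs
begin

definition bk_ev :: "nat set \<Rightarrow> ('a::comm_ring_1) bk \<Rightarrow> 'a" where
  "bk_ev A f = (\<Sum>S\<in>Pow A. f S)"

fun bkP :: "nat \<Rightarrow> (nat \<Rightarrow> ('a::comm_ring_1) bk) \<Rightarrow> nat \<Rightarrow> 'a bk" where
  "bkP k W 0 = bk_one"
| "bkP k W (Suc j) = bk_mult k (bkP k W j) (bk_sub bk_one (W (Suc j)))"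

lemma sum_pow_restrict:
  fixes k :: nat
  assumes "A \<subseteq> {1..k}"
  shows "(\<Sum>T\<in>Pow {1..k}. if T \<subseteq> A then h T else 0) = (\<Sum>T\<in>Pow A. h T)"
proof -
  have "(\<Sum>T\<in>Pow {1..k}. if T \<subseteq> A then h T else 0) = (\<Sum>T\<in>Pow {1..k} \<inter> {T. T \<subseteq> A}. h T)"
    by (subst sum.inter_restrict) auto
  also have "Pow {1..k} \<inter> {T. T \<subseteq> A} = Pow A" using assms by auto
  finally show ?thesis .
qed

lemma ev_mult:
  assumes "A \<subseteq> {1..k}"
  shows "bk_ev A (bk_mult k f g) = bk_ev A f * bk_ev A (g::'a::comm_ring_1 bk)"
proof -
  have fin: "finite (Pow {1..k})" by simp
  have "bk_ev A (bk_mult k f g) = (\<Sum>U\<in>Pow A. \<Sum>S\<in>Pow {1..k}. \<Sum>T\<in>Pow {1..k}.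
      if S \<union> T = U then f S * g T else 0)" unfolding bk_ev_def bk_mult_def by simp
  also have "\<dots> = (\<Sum>S\<in>Pow {1..k}. \<Sum>T\<in>Pow {1..k}. \<Sum>U\<in>Pow A.
      if S \<union> T = U then f S * g T else 0)"
    by (simp add: sum.swap[of _ "Pow A"] sum.swap[of _ "Pow {1..k}" "Pow A"])
  also have "\<dots> = (\<Sum>S\<in>Pow {1..k}. \<Sum>T\<in>Pow {1..k}.
      if S \<subseteq> A \<and> T \<subseteq> A then f S * g T else 0)"
  proof (intro sum.cong refl)
    fix S T
    have "finite (Pow A)" using assms finite_subset by (metis finite_Pow_iff finite_atLeastAtMost)
    then show "(\<Sum>U\<in>Pow A. if S \<union> T = U then f S * g T else 0) =
      (if S \<subseteq> A \<and> T \<subseteq> A then f S * g T else 0)"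
      by (simp add: sum.delta)
  qed
  also have "\<dots> = (\<Sum>S\<in>Pow A. \<Sum>T\<in>Pow A. f S * g T)"
  proof -
    have PA: "Pow A \<subseteq> Pow {1..k}" using assms by auto
    have "(\<Sum>S\<in>Pow {1..k}. \<Sum>T\<in>Pow {1..k}. if S \<subseteq> A \<and> T \<subseteq> A then f S * g T else 0)
       = (\<Sum>S\<in>Pow {1..k}. if S \<subseteq> A then (\<Sum>T\<in>Pow {1..k}. if T \<subseteq> A then f S * g T else 0) else 0)"
      by (intro sum.cong refl) auto
    also have "\<dots> = (\<Sum>S\<in>Pow {1..k}. if S \<subseteq> A then (\<Sum>T\<in>Pow A. f S * g T) else 0)"
      using sum_pow_restrict[OF assms] by (intro sum.cong refl) auto
    also have "\<dots> = (\<Sum>S\<in>Pow A. \<Sum>T\<in>Pow A. f S * g T)"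
      using sum_pow_restrict[OF assms] by auto
    finally show ?thesis .
  qed
  also have "\<dots> = bk_ev A f * bk_ev A g"
    unfolding bk_ev_def by (simp add: sum_product)
  finally show ?thesis .
qed

lemma mult_Bk: "bk_mult k f g \<in> Bk k"
  unfolding Bk_def bk_mult_def
proof (intro CollectI allI impI)
  fix U :: "nat set" assume "\<not> U \<subseteq> {1..k}"
  then have "\<forall>S\<in>Pow {1..k}. \<forall>T\<in>Pow {1..k}. S \<union> T \<noteq> U" by auto
  then show "(\<Sum>S\<in>Pow {1..k}. \<Sum>T\<in>Pow {1..k}. if S \<union> T = U then f S * g T else 0) = 0"
    by (intro sum.neutral ballI) simp
qed

lemma one_Bk: "(bk_one::'a::comm_ring_1 bk) \<in> Bk k"
  unfolding Bk_def bk_one_def by auto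

lemma bkP_Bk: "bkP k W j \<in> Bk k"
  by (cases j) (auto simp: one_Bk mult_Bk)

lemma finA: "A \<subseteq> {1..(k::nat)} \<Longrightarrow> finite A"
  using finite_subset by blast

lemma ev_zero: "bk_ev A (bk_zero::'a::comm_ring_1 bk) = 0"
  unfolding bk_ev_def bk_zero_def by simp

lemma ev_one: "A \<subseteq> {1..(k::nat)} \<Longrightarrow> bk_ev A (bk_one::'a::comm_ring_1 bk) = 1"
  unfolding bk_ev_def bk_one_def using finA[of A k] by (simp add: sum.delta)

lemma ev_var: "A \<subseteq> {1..(k::nat)} \<Longrightarrow> bk_ev A (bk_var i::'a::comm_ring_1 bk) = (if i \<in> A then 1 else 0)"
  unfolding bk_ev_def bk_var_def using finA[of A k] by (simp add: sum.delta)

lemma ev_sub: "bk_ev A (bk_sub f g) = bk_ev A f - bk_ev A (g::'a::comm_ring_1 bk)"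
  unfolding bk_ev_def bk_sub_def by (simp add: sum_subtractf)

lemma ev_sum: "bk_ev A (\<lambda>S. \<Sum>i\<in>I. h i S) = (\<Sum>i\<in>I. bk_ev A (h i::'a::comm_ring_1 bk))"
  unfolding bk_ev_def by (rule sum.swap)

lemma ev_bkP: "A \<subseteq> {1..k} \<Longrightarrow>
  bk_ev A (bkP k W j) = (\<Prod>l\<in>{1..j}. 1 - bk_ev A (W l))"
proof (induction j)
  case 0 then show ?case by (simp add: ev_one)
next
  case (Suc j)
  then show ?case by (simp add: ev_mult ev_sub ev_one)
qed

lemma ev_inj:
  assumes "f \<in> Bk k" and "\<forall>A. A \<subseteq> {1..k} \<longrightarrow> bk_ev A f = (0::'a::comm_ring_1)"
  shows "f = bk_zero"
proof -
  have "\<forall>S. card S = n \<longrightarrow> f S = 0" for n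
  proof (induction n rule: less_induct)
    case (less n)
    show ?case
    proof (intro allI impI)
      fix S :: "nat set" assume cS: "card S = n"
      show "f S = 0"
      proof (cases "S \<subseteq> {1..k}")
        case False then show ?thesis using assms(1) unfolding Bk_def by auto
      next
        case True
        have fS: "finite S" using True finA by blast
        have "0 = bk_ev S f" using assms(2) True by simp
        also have "\<dots> = f S + (\<Sum>T\<in>Pow S - {S}. f T)"
          unfolding bk_ev_def using fS by (simp add: sum.remove[of "Pow S" S])
        also have "(\<Sum>T\<in>Pow S - {S}. f T) = 0"
        proof (rule sum.neutral, intro ballI)
          fix T assume "T \<in> Pow S - {S}"
          then have "T \<subset> S" by auto
          then have "card T < n" using cS fS psubset_card_mono by blast
          then show "f T = 0" using less by blast
        qed
        finally show ?thesis by simp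
      qed
    qed
  qed
  then show ?thesis unfolding bk_zero_def by auto
qed

lemma telescope:
  "(\<Sum>i\<in>{1..n}. e i * (\<Prod>l\<in>{1..i-1}. 1 - e l)) = 1 - (\<Prod>l\<in>{1..n}. 1 - (e l::'a::comm_ring_1))" for n :: nat
proof (induction n)
  case 0 then show ?case by simp
next
  case (Suc n)
  have "(\<Sum>i\<in>{1..Suc n}. e i * (\<Prod>l\<in>{1..i-1}. 1 - e l)) =
     (\<Sum>i\<in>{1..n}. e i * (\<Prod>l\<in>{1..i-1}. 1 - e l)) + e (Suc n) * (\<Prod>l\<in>{1..n}. 1 - e l)"
    by simp
  also have "\<dots> = 1 - (\<Prod>l\<in>{1..Suc n}. 1 - e l)"
    using Suc by (simp add: algebra_simps)
  finally show ?case .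
qed

lemma ev_W:
  assumes "B \<subseteq> {1..(k::nat)}" "i \<in> {1..k}"
    and "W i = (if i \<in> A then bk_sub bk_one (bk_var i) else bk_var i)"
  shows "bk_ev B (W i) = (if (i \<in> A) = (i \<in> B) then 0 else (1::'a::comm_ring_1))"
  using assms by (simp add: ev_sub ev_one[OF assms(1)] ev_var[OF assms(1)])

lemma prod_W:
  assumes "A \<subseteq> {1..(k::nat)}" "B \<subseteq> {1..k}"
    and "\<forall>i\<in>{1..k}. W i = (if i \<in> A then bk_sub bk_one (bk_var i) else bk_var i)"
  shows "(\<Prod>l\<in>{1..k}. 1 - bk_ev B (W l)) = (if B = A then 1 else (0::'a::comm_ring_1))"
proof (cases "B = A")
  case True
  have "\<forall>l\<in>{1..k}. 1 - bk_ev B (W l) = (1::'a)"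
    using ev_W[OF assms(2), of _ W A] assms(3) True by simp
  then show ?thesis using True by (simp add: prod.neutral)
next
  case False
  then obtain l where l: "l \<in> {1..k}" "(l \<in> A) \<noteq> (l \<in> B)" using assms(1,2) by blast
  then have "1 - bk_ev B (W l) = (0::'a)" using assms ev_W[OF assms(2) l(1), of W A] by simp
  then have "\<exists>a\<in>{1..k}. 1 - bk_ev B (W a) = (0::'a)" using l(1) by blast
  then show ?thesis using False by (simp add: prod_zero)
qed

theorem lemma2p3:
  fixes k :: nat and \<omega> :: "('a::{finite,field}) bk"
  assumes "k \<ge> 1" and "\<omega> \<in> Bk k"
  shows "bk_zero_divisor k \<omega> \<longleftrightarrow>
    (\<exists>W. (\<forall>i\<in>{1..k}. W i = bk_var i \<or> W i = bk_sub bk_one (bk_var i)) \<and>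
         \<omega> \<in> bk_ideal k W)"
proof
  assume "bk_zero_divisor k \<omega>"
  then obtain b where b: "b \<in> Bk k" "b \<noteq> bk_zero" "bk_mult k \<omega> b = bk_zero"
    unfolding bk_zero_divisor_def by blast
  obtain A where A: "A \<subseteq> {1..k}" "bk_ev A b \<noteq> 0"
    using ev_inj[OF b(1)] b(2) by blast
  have "bk_ev A \<omega> * bk_ev A b = 0"
    using ev_mult[OF A(1), of \<omega> b] b(3) by (simp add: ev_zero)
  then have evA: "bk_ev A \<omega> = 0" using A(2) by simp
  define W where "W = (\<lambda>i. if i \<in> A then bk_sub bk_one (bk_var i) else (bk_var i::'a bk))"
  have Wd: "\<forall>i\<in>{1..k}. W i = (if i \<in> A then bk_sub bk_one (bk_var i) else bk_var i)"
    unfolding W_def by simp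
  define a where "a = (\<lambda>i. bk_mult k \<omega> (bkP k W (i - 1)))"
  define g where "g = (\<lambda>S. \<Sum>i\<in>{1..k}. bk_mult k (a i) (W i) S)"
  have gBk: "g \<in> Bk k"
  proof -
    have "\<And>S i. \<not> S \<subseteq> {1..k} \<Longrightarrow> bk_mult k (a i) (W i) S = 0"
      using mult_Bk unfolding Bk_def by blast
    then show ?thesis unfolding g_def Bk_def by simp
  qed
  have "bk_sub \<omega> g = bk_zero"
  proof (rule ev_inj)
    show "bk_sub \<omega> g \<in> Bk k" using assms(2) gBk unfolding Bk_def bk_sub_def by auto
    show "\<forall>B. B \<subseteq> {1..k} \<longrightarrow> bk_ev B (bk_sub \<omega> g) = 0"
    proof (intro allI impI)
      fix B assume B: "B \<subseteq> {1..k}"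
      let ?e = "\<lambda>l. bk_ev B (W l)"
      have "bk_ev B g = (\<Sum>i\<in>{1..k}. bk_ev B \<omega> * (?e i * (\<Prod>l\<in>{1..i-1}. 1 - ?e l)))"
        unfolding g_def ev_sum a_def
        by (intro sum.cong refl) (simp add: ev_mult[OF B] ev_bkP[OF B] mult_ac)
      also have "\<dots> = bk_ev B \<omega> * (1 - (\<Prod>l\<in>{1..k}. 1 - ?e l))"
      proof -
        have T: "(\<Sum>i\<in>{1..k}. ?e i * (\<Prod>l\<in>{1..i-1}. 1 - ?e l)) = 1 - (\<Prod>l\<in>{1..k}. 1 - ?e l)"
          by (rule telescope)
        show ?thesis by (simp only: T[symmetric] sum_distrib_left)
      qed
      also have "\<dots> = bk_ev B \<omega>"
        using prod_W[OF A(1) B Wd] evA by (auto simp: algebra_simps)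
      finally show "bk_ev B (bk_sub \<omega> g) = 0" by (simp add: ev_sub)
    qed
  qed
  then have "\<omega> = g"
  proof -
    assume h: "bk_sub \<omega> g = bk_zero"
    show "\<omega> = g"
    proof
      fix S
      have "\<omega> S - g S = 0" using fun_cong[OF h, of S] unfolding bk_sub_def bk_zero_def by simp
      then show "\<omega> S = g S" by simp
    qed
  qed
  then have "\<omega> \<in> bk_ideal k W"
    unfolding bk_ideal_def
  proof (intro CollectI exI[of _ a] conjI ballI)
    show "\<omega> = (\<lambda>S. \<Sum>i\<in>{1..k}. bk_mult k (a i) (W i) S)" using \<open>\<omega> = g\<close> unfolding g_def .
  qed (simp add: a_def mult_Bk)
  then show "\<exists>W. (\<forall>i\<in>{1..k}. W i = bk_var i \<or> W i = bk_sub bk_one (bk_var i)) \<and>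
         \<omega> \<in> bk_ideal k W"
  proof (intro exI conjI)
    show "\<forall>i\<in>{1..k}. W i = bk_var i \<or> W i = bk_sub bk_one (bk_var i)"
      unfolding W_def by auto
  qed
next
  assume "\<exists>W. (\<forall>i\<in>{1..k}. W i = bk_var i \<or> W i = bk_sub bk_one (bk_var i)) \<and>
         \<omega> \<in> bk_ideal k W"
  then obtain W a where W: "\<forall>i\<in>{1..k}. W i = bk_var i \<or> W i = bk_sub bk_one (bk_var i)"
    and a: "\<omega> = (\<lambda>S. \<Sum>i\<in>{1..k}. bk_mult k (a i) (W i) S)"
    unfolding bk_ideal_def by auto
  define A where "A = {i\<in>{1..k}. W i = bk_sub bk_one (bk_var i)}"
  have A: "A \<subseteq> {1..k}" unfolding A_def by auto
  have Wd: "\<forall>i\<in>{1..k}. W i = (if i \<in> A then bk_sub bk_one (bk_var i) else bk_var i)"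
    using W unfolding A_def by auto
  have evA: "bk_ev A \<omega> = 0"
    unfolding a ev_sum
  proof (intro sum.neutral ballI)
    fix i assume i: "i \<in> {1..k}"
    have "bk_ev A (W i) = 0" using ev_W[OF A i, of W A] Wd i by simp
    then show "bk_ev A (bk_mult k (a i) (W i)) = 0" by (simp add: ev_mult[OF A])
  qed
  define b where "b = bkP k W k"
  have evb: "bk_ev B b = (if B = A then 1 else 0)" if "B \<subseteq> {1..k}" for B
    unfolding b_def using ev_bkP[OF that, of W k] prod_W[OF A that Wd] by (simp only:)
  show "bk_zero_divisor k \<omega>"
    unfolding bk_zero_divisor_def
  proof (intro bexI conjI)
    show "b \<in> Bk k" unfolding b_def by (rule bkP_Bk)
    show "b \<noteq> bk_zero"
    proof
      assume "b = bk_zero"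
      then have "bk_ev A b = 0" by (simp add: ev_zero)
      moreover have "bk_ev A b = (1::'a)" using evb[OF A] by simp
      ultimately have "(1::'a) = 0" by simp
      then show False by simp
    qed
    show "bk_mult k \<omega> b = bk_zero"
      by (rule ev_inj[OF mult_Bk]) (auto simp: ev_mult evb evA)
  qed
qed

end
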